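(* Let $0<t_0\le1/2$, $t\in[t_0,1]$. There exist nonnegative integers $c^{k,j}_{\ell,p,q}$ ($k,j,\ell,p,q\in\mathbb Z_+$), with $c^{0,0}_{0,0,0}=1$, determined by the recursion $$c^{k+1,j}_{\ell,p,q}=c^{k,j-2}_{\ell,p-1,q}+c^{k,j}_{\ell,p,q-1}+2c^{k,j-1}_{\ell-1,p,q}$$ under the convention that $c^{k,j}_{\ell,p,q}=0$ if $j>2k$ or any entry of $(j,\ell,p,q)$ is negative, such that for every $k\in\mathbb Z_+$ and all sufficiently smooth functions $g,h$ on $\mathbb T^3\times\mathbb R^3$, $$M^k(gh)=\sum_{j=0}^{2k}A_{j,2k-j}(g,h),\qquad A_{j,2k-j}(g,h)=\sum_{\ell+2p=j,\ \ell+2q=2k-j}c^{k,j}_{\ell,p,q}\,(\Lambda^\ell M^pg)\cdot(\Lambda^\ell M^qh),$$ the inner sum being over all nonnegative integers $\ell,p,q$ with $\ell+2p=j$ and $\ell+2q=2k-j$. Moreover $$\sum_{\ell+2p=j,\ \ell+2q=2k-j}c^{k,j}_{\ell,p,q}=\binom{2k}{j}.$$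
   Context: $M=-(t-t_0)\partial_{v_1}^2-(t-t_0)^2\partial_{x_1}\partial_{v_1}-\frac{(t-t_0)^3}{3}\partial_{x_1}^2$ acting on functions of $(x,v)\in\mathbb T^3\times\mathbb R^3$. With $\sqrt{-1}$ the imaginary unit, $\Lambda_1=\frac{1}{2\sqrt{-1}}\big((t-t_0)^{1/2}\partial_{v_1}+(t-t_0)^{3/2}\partial_{x_1}\big)$ and $\Lambda_2=\frac{\sqrt3}{6\sqrt{-1}}\big(3(t-t_0)^{1/2}\partial_{v_1}+(t-t_0)^{3/2}\partial_{x_1}\big)$, so that $M=\Lambda_1^2+\Lambda_2^2$. For $\ell\in\mathbb Z_+$, $\Lambda^\ell g\cdot\Lambda^\ell h:=\sum_{j_1=1}^2\cdots\sum_{j_\ell=1}^2(\Lambda_{j_1}\cdots\Lambda_{j_\ell}g)(\Lambda_{j_1}\cdots\Lambda_{j_\ell}h)$ (equal to $gh$ when $\ell=0$). *)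

theory Defs
  imports "HOL-Analysis.Analysis"
begin

text \<open>Phase space point (x, v) with x in R^3 (representing T^3 via 1-periodicity) and v in R^3.\<close>
type_synonym pt = "(real^3) \<times> (real^3)"
type_synonym fn = "pt \<Rightarrow> complex"

text \<open>C-infinity: f lies in a family of everywhere (Frechet-)differentiable functions
  closed under taking directional derivatives in every direction.\<close>
definition smooth_fun :: "fn \<Rightarrow> bool" where
  "smooth_fun f \<longleftrightarrow> (\<exists>F. f \<in> F \<and> (\<forall>g\<in>F. \<forall>p. g differentiable (at p))
      \<and> (\<forall>g\<in>F. \<forall>u. (\<lambda>p. frechet_derivative g (at p) u) \<in> F))"

definition periodic_x :: "fn \<Rightarrow> bool" where
  "periodic_x f \<longleftrightarrow> (\<forall>x v i. f (x + axis i 1, v) = f (x, v))"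

definition dx1 :: "fn \<Rightarrow> fn" where
  "dx1 f = (\<lambda>p. frechet_derivative f (at p) (axis 1 1, 0))"

definition dv1 :: "fn \<Rightarrow> fn" where
  "dv1 f = (\<lambda>p. frechet_derivative f (at p) (0, axis 1 1))"

text \<open>M with tau = t - t0.\<close>
definition Mop :: "real \<Rightarrow> fn \<Rightarrow> fn" where
  "Mop \<tau> f = (\<lambda>p. - (complex_of_real \<tau> * dv1 (dv1 f) p)
                   - complex_of_real (\<tau>^2) * dx1 (dv1 f) p
                   - complex_of_real (\<tau>^3 / 3) * dx1 (dx1 f) p)"

definition Lam :: "real \<Rightarrow> nat \<Rightarrow> fn \<Rightarrow> fn" where
  "Lam \<tau> j f = (if j = 1 then
      (\<lambda>p. (1 / (2 * \<i>)) * (complex_of_real (\<tau> powr (1/2)) * dv1 f p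
                              + complex_of_real (\<tau> powr (3/2)) * dx1 f p))
    else
      (\<lambda>p. (complex_of_real (sqrt 3) / (6 * \<i>)) *
             (3 * complex_of_real (\<tau> powr (1/2)) * dv1 f p
              + complex_of_real (\<tau> powr (3/2)) * dx1 f p)))"

definition lam_word :: "real \<Rightarrow> nat list \<Rightarrow> fn \<Rightarrow> fn" where
  "lam_word \<tau> w f = foldr (Lam \<tau>) w f"

definition lam_dot :: "real \<Rightarrow> nat \<Rightarrow> fn \<Rightarrow> fn \<Rightarrow> fn" where
  "lam_dot \<tau> l g h = (\<lambda>p. \<Sum>w\<in>{w. length w = l \<and> set w \<subseteq> {1,2}}.
       lam_word \<tau> w g p * lam_word \<tau> w h p)"

definition idx :: "nat \<Rightarrow> nat \<Rightarrow> (nat \<times> nat \<times> nat) set" where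
  "idx k j = {(l, p, q). l + 2 * p = j \<and> l + 2 * q = 2 * k - j}"

end

theory Submission
  imports Defs
begin


lemma fd_linear:
  assumes "f differentiable (at x)"
  shows "bounded_linear (frechet_derivative f (at x))"
  using assms frechet_derivative_works has_derivative_bounded_linear by blast

lemma bl_scale: "bounded_linear f \<Longrightarrow> f (c *\<^sub>R x) = c *\<^sub>R f x"
  by (simp add: linear_cmul bounded_linear.linear)
lemma bl_add: "bounded_linear f \<Longrightarrow> f (x + y) = f x + f y"
  by (simp add: linear_add bounded_linear.linear)
lemma bl_diff: "bounded_linear f \<Longrightarrow> f (x - y) = f x - f y"
  by (simp add: linear_diff bounded_linear.linear)

lemma sym_aux:
  fixes f :: "'a::real_normed_vector \<Rightarrow> complex"
  assumes df: "\<And>x. f differentiable (at x)"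
  and dU: "(\<lambda>x. frechet_derivative f (at x) u) differentiable (at p0)"
  and e: "e > 0"
  shows "\<exists>d>0. \<forall>h. 0<h \<and> h<d \<longrightarrow> norm (f (p0 + h*\<^sub>R u + h*\<^sub>R v) - f (p0 + h*\<^sub>R u) - f (p0 + h*\<^sub>R v) + f p0
     - of_real (h^2) * frechet_derivative (\<lambda>x. frechet_derivative f (at x) u) (at p0) v) \<le> e * h^2"
proof -
  define U where "U = (\<lambda>x. frechet_derivative f (at x) u)"
  define L where "L = frechet_derivative U (at p0)"
  have UL: "(U has_derivative L) (at p0)" using dU unfolding U_def L_def
    using frechet_derivative_works by blast
  have bl: "bounded_linear L" using UL has_derivative_bounded_linear by blast
  define K where "K = 2 * norm u + norm v + 1"
  have K: "K > 0" unfolding K_def by (simp add: add_nonneg_pos)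
  define e' where "e' = e / K"
  have e': "e' > 0" using e K unfolding e'_def by simp
  obtain d where d: "d > 0" and dd: "\<And>y. norm (y - p0) < d \<Longrightarrow> norm (U y - U p0 - L (y - p0)) \<le> e' * norm (y - p0)"
    using UL e' unfolding has_derivative_at_alt by blast
  show ?thesis
  proof (intro exI[of _ "d / K"] conjI allI impI)
    show "d / K > 0" using d K by simp
    fix h :: real assume h: "0 < h \<and> h < d / K"
    hence h0: "0 < h" and hK: "h * K < d" using K by (auto simp: field_simps)
    define B where "B = L v"
    define G where "G = (\<lambda>s::real. f (p0 + s *\<^sub>R u + h *\<^sub>R v) - f (p0 + s *\<^sub>R u) - s *\<^sub>R (h *\<^sub>R B))"
    define G' where "G' = (\<lambda>s t::real. frechet_derivative f (at (p0 + s *\<^sub>R u + h *\<^sub>R v)) (t *\<^sub>R u)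
         - frechet_derivative f (at (p0 + s *\<^sub>R u)) (t *\<^sub>R u) - t *\<^sub>R (h *\<^sub>R B))"
    have Gd: "(G has_derivative G' s) (at s)" for s
    proof -
      have d1: "((\<lambda>s. p0 + s *\<^sub>R u + h *\<^sub>R v) has_derivative (\<lambda>t. t *\<^sub>R u)) (at s)"
        by (auto intro!: derivative_eq_intros)
      have d2: "((\<lambda>s. p0 + s *\<^sub>R u) has_derivative (\<lambda>t. t *\<^sub>R u)) (at s)"
        by (auto intro!: derivative_eq_intros)
      have f1: "((\<lambda>s. f (p0 + s *\<^sub>R u + h *\<^sub>R v)) has_derivative (\<lambda>t. frechet_derivative f (at (p0 + s *\<^sub>R u + h *\<^sub>R v)) (t *\<^sub>R u))) (at s)"
        using has_derivative_compose[OF d1 frechet_derivative_works[THEN iffD1, OF df]] by (simp add: o_def)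
      have f2: "((\<lambda>s. f (p0 + s *\<^sub>R u)) has_derivative (\<lambda>t. frechet_derivative f (at (p0 + s *\<^sub>R u)) (t *\<^sub>R u))) (at s)"
        using has_derivative_compose[OF d2 frechet_derivative_works[THEN iffD1, OF df]] by (simp add: o_def)
      have f3: "((\<lambda>s. s *\<^sub>R (h *\<^sub>R B)) has_derivative (\<lambda>t. t *\<^sub>R (h *\<^sub>R B))) (at s)"
        by (auto intro!: derivative_eq_intros)
      show ?thesis unfolding G_def G'_def
        by (intro has_derivative_diff f1 f2 f3)
    qed
    have "continuous_on {0..h} G"
      using Gd by (meson continuous_at_imp_continuous_on has_derivative_continuous)
    then obtain s where s: "s \<in> {0<..<h}" and mv: "norm (G h - G 0) \<le> norm (G' s (h - 0))"
      using mvt_general[OF h0, of G G'] Gd by blast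
    have lin1: "frechet_derivative f (at x) (t *\<^sub>R u) = t *\<^sub>R U x" for x t
      unfolding U_def using fd_linear[OF df] by (simp add: bl_scale)
    have "G' s h = h *\<^sub>R (U (p0 + s *\<^sub>R u + h *\<^sub>R v) - U (p0 + s *\<^sub>R u) - h *\<^sub>R B)"
      unfolding G'_def lin1 by (simp add: algebra_simps)
    also have "U (p0 + s *\<^sub>R u + h *\<^sub>R v) - U (p0 + s *\<^sub>R u) - h *\<^sub>R B =
        (U (p0 + s *\<^sub>R u + h *\<^sub>R v) - U p0 - L (s *\<^sub>R u + h *\<^sub>R v))
      - (U (p0 + s *\<^sub>R u) - U p0 - L (s *\<^sub>R u))"
      unfolding B_def using bl by (simp add: bl_add bl_scale algebra_simps)
    finally have G's: "G' s h = h *\<^sub>R ((U (p0 + s *\<^sub>R u + h *\<^sub>R v) - U p0 - L (s *\<^sub>R u + h *\<^sub>R v))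
      - (U (p0 + s *\<^sub>R u) - U p0 - L (s *\<^sub>R u)))" .
    have n1: "norm (s *\<^sub>R u + h *\<^sub>R v) \<le> h * (norm u + norm v)"
    proof -
      have "norm (s *\<^sub>R u + h *\<^sub>R v) \<le> norm (s *\<^sub>R u) + norm (h *\<^sub>R v)" by (rule norm_triangle_ineq)
      also have "\<dots> = s * norm u + h * norm v" using s h0 by simp
      also have "\<dots> \<le> h * norm u + h * norm v" using s by (simp add: mult_right_mono)
      finally show ?thesis by (simp add: algebra_simps)
    qed
    have n2: "norm (s *\<^sub>R u) \<le> h * norm u" using s by (simp add: mult_right_mono)
    have KK: "h * (norm u + norm v) \<le> h * K" "h * norm u \<le> h * K" using h0 unfolding K_def
      by (auto intro!: mult_left_mono)
    have b1: "norm (U (p0 + s *\<^sub>R u + h *\<^sub>R v) - U p0 - L (s *\<^sub>R u + h *\<^sub>R v)) \<le> e' * (h * (norm u + norm v))"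
    proof -
      have "norm (U (p0 + s *\<^sub>R u + h *\<^sub>R v) - U p0 - L (s *\<^sub>R u + h *\<^sub>R v)) \<le> e' * norm (s *\<^sub>R u + h *\<^sub>R v)"
        using dd[of "p0 + s *\<^sub>R u + h *\<^sub>R v"] n1 KK hK by (simp add: add.assoc)
      also have "\<dots> \<le> e' * (h * (norm u + norm v))" using n1 e' by (simp add: mult_left_mono)
      finally show ?thesis .
    qed
    have b2: "norm (U (p0 + s *\<^sub>R u) - U p0 - L (s *\<^sub>R u)) \<le> e' * (h * norm u)"
    proof -
      have "norm (U (p0 + s *\<^sub>R u) - U p0 - L (s *\<^sub>R u)) \<le> e' * norm (s *\<^sub>R u)"
        using dd[of "p0 + s *\<^sub>R u"] n2 KK hK by simp
      also have "\<dots> \<le> e' * (h * norm u)" using n2 e' by (simp add: mult_left_mono)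
      finally show ?thesis .
    qed
    have "norm (G' s h) \<le> h * (e' * (h * (norm u + norm v)) + e' * (h * norm u))"
    proof -
      have "norm ((U (p0 + s *\<^sub>R u + h *\<^sub>R v) - U p0 - L (s *\<^sub>R u + h *\<^sub>R v))
      - (U (p0 + s *\<^sub>R u) - U p0 - L (s *\<^sub>R u))) \<le> e' * (h * (norm u + norm v)) + e' * (h * norm u)"
        using b1 b2 norm_triangle_ineq4 by (smt (verit))
      then show ?thesis unfolding G's using h0 by (simp add: mult_left_mono)
    qed
    also have "\<dots> = e' * h^2 * (2 * norm u + norm v)" by (simp add: algebra_simps power2_eq_square)
    also have "\<dots> \<le> e' * h^2 * K" unfolding K_def using e' by (simp add: mult_left_mono)
    also have "\<dots> = e * h^2" unfolding e'_def using K by simp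
    finally have "norm (G h - G 0) \<le> e * h^2" using mv by simp
    moreover have "G h - G 0 = f (p0 + h*\<^sub>R u + h*\<^sub>R v) - f (p0 + h*\<^sub>R u) - f (p0 + h*\<^sub>R v) + f p0
     - of_real (h^2) * frechet_derivative (\<lambda>x. frechet_derivative f (at x) u) (at p0) v"
      unfolding G_def B_def L_def U_def by (simp add: scaleR_conv_of_real power2_eq_square algebra_simps)
    ultimately show "norm (f (p0 + h*\<^sub>R u + h*\<^sub>R v) - f (p0 + h*\<^sub>R u) - f (p0 + h*\<^sub>R v) + f p0
     - of_real (h^2) * frechet_derivative (\<lambda>x. frechet_derivative f (at x) u) (at p0) v) \<le> e * h^2" by simp
  qed
qed

lemma fd_sym:
  fixes f :: "'a::real_normed_vector \<Rightarrow> complex"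
  assumes df: "\<And>x. f differentiable (at x)"
  and dU: "(\<lambda>x. frechet_derivative f (at x) u) differentiable (at p0)"
  and dV: "(\<lambda>x. frechet_derivative f (at x) v) differentiable (at p0)"
  shows "frechet_derivative (\<lambda>x. frechet_derivative f (at x) u) (at p0) v
       = frechet_derivative (\<lambda>x. frechet_derivative f (at x) v) (at p0) u"
proof (rule ccontr)
  define B where "B = frechet_derivative (\<lambda>x. frechet_derivative f (at x) u) (at p0) v"
  define A where "A = frechet_derivative (\<lambda>x. frechet_derivative f (at x) v) (at p0) u"
  assume "B \<noteq> A"
  define e where "e = norm (A - B) / 4"
  have e: "e > 0" using \<open>B \<noteq> A\<close> unfolding e_def by simp
  obtain d1 where d1: "d1 > 0" and h1: "\<And>h. 0<h \<and> h<d1 \<Longrightarrow> norm (f (p0 + h*\<^sub>R u + h*\<^sub>R v) - f (p0 + h*\<^sub>R u) - f (p0 + h*\<^sub>R v) + f p0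
     - of_real (h^2) * B) \<le> e * h^2"
    using sym_aux[OF df dU e, of v] unfolding B_def by blast
  obtain d2 where d2: "d2 > 0" and h2: "\<And>h. 0<h \<and> h<d2 \<Longrightarrow> norm (f (p0 + h*\<^sub>R v + h*\<^sub>R u) - f (p0 + h*\<^sub>R v) - f (p0 + h*\<^sub>R u) + f p0
     - of_real (h^2) * A) \<le> e * h^2"
    using sym_aux[OF df dV e, of u] unfolding A_def by blast
  define h where "h = min d1 d2 / 2"
  have h: "0 < h" "h < d1" "h < d2" unfolding h_def using d1 d2 by auto
  define X where "X = f (p0 + h*\<^sub>R u + h*\<^sub>R v) - f (p0 + h*\<^sub>R u) - f (p0 + h*\<^sub>R v) + f p0"
  have X2: "f (p0 + h*\<^sub>R v + h*\<^sub>R u) - f (p0 + h*\<^sub>R v) - f (p0 + h*\<^sub>R u) + f p0 = X"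
    unfolding X_def by (simp add: add_ac)
  have a1: "norm (X - of_real (h^2) * B) \<le> e * h^2" using h1[of h] h unfolding X_def by simp
  have a2: "norm (X - of_real (h^2) * A) \<le> e * h^2" using h2[of h] h X2 by simp
  have "of_real (h^2) * (A - B) = (X - of_real (h^2) * B) - (X - of_real (h^2) * A)"
    by (simp add: algebra_simps)
  hence "norm (of_real (h^2) * (A - B)) = norm ((X - of_real (h^2) * B) - (X - of_real (h^2) * A))" by simp
  also have "\<dots> \<le> norm (X - of_real (h^2) * B) + norm (X - of_real (h^2) * A)" by (rule norm_triangle_ineq4)
  also have "\<dots> \<le> 2 * e * h^2" using a1 a2 by simp
  finally have "norm (of_real (h^2) * (A - B)) \<le> 2 * e * h^2" .
  moreover have "norm (of_real (h^2) * (A - B)) = h^2 * norm (A - B)"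
    by (simp add: norm_mult del: of_real_power)
  ultimately have "h^2 * norm (A - B) \<le> h^2 * (norm (A - B) / 2)" unfolding e_def by (simp add: algebra_simps)
  hence "norm (A - B) \<le> norm (A - B) / 2" using h by (simp add: mult_le_cancel_left)
  thus False using e unfolding e_def by simp
qed



definition dd :: "pt \<Rightarrow> fn \<Rightarrow> fn" where
  "dd u f = (\<lambda>p. frechet_derivative f (at p) u)"

lemma smooth_differentiable: "smooth_fun f \<Longrightarrow> f differentiable (at p)"
  unfolding smooth_fun_def by blast

lemma smooth_dd: "smooth_fun f \<Longrightarrow> smooth_fun (dd u f)"
  unfolding smooth_fun_def dd_def by blast

inductive_set alg :: "fn set" where
  base: "smooth_fun f \<Longrightarrow> f \<in> alg"
| const: "(\<lambda>p. c) \<in> alg"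
| add: "f \<in> alg \<Longrightarrow> g \<in> alg \<Longrightarrow> (\<lambda>p. f p + g p) \<in> alg"
| mult: "f \<in> alg \<Longrightarrow> g \<in> alg \<Longrightarrow> (\<lambda>p. f p * g p) \<in> alg"

lemma fd_add:
  assumes "f differentiable (at p)" "g differentiable (at p)"
  shows "frechet_derivative (\<lambda>x. f x + g x) (at p) = (\<lambda>h. frechet_derivative f (at p) h + frechet_derivative g (at p) h)"
  by (rule frechet_derivative_at[symmetric], rule has_derivative_add)
    (use assms frechet_derivative_works in blast)+

lemma fd_mult:
  fixes f g :: "pt \<Rightarrow> complex"
  assumes "f differentiable (at p)" "g differentiable (at p)"
  shows "frechet_derivative (\<lambda>x. f x * g x) (at p) = (\<lambda>h. f p * frechet_derivative g (at p) h + frechet_derivative f (at p) h * g p)"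
  by (rule frechet_derivative_at[symmetric], rule has_derivative_mult)
    (use assms frechet_derivative_works in blast)+

lemma alg_closed: "g \<in> alg \<Longrightarrow> (\<forall>p. g differentiable (at p)) \<and> (\<forall>u. dd u g \<in> alg)"
proof (induction rule: alg.induct)
  case (base f)
  then show ?case by (simp add: smooth_differentiable smooth_dd alg.base)
next
  case (const c)
  then show ?case by (simp add: dd_def alg.const)
next
  case (add f g)
  have "dd u (\<lambda>p. f p + g p) = (\<lambda>p. dd u f p + dd u g p)" for u
  proof -
    have "\<And>p. f differentiable (at p)" "\<And>p. g differentiable (at p)" using add.IH by blast+
    thus ?thesis unfolding dd_def by (intro ext) (simp only: fd_add)
  qed
  then show ?case using add by (auto intro: alg.add)
next
  case (mult f g)
  have "dd u (\<lambda>p. f p * g p) = (\<lambda>p. f p * dd u g p + dd u f p * g p)" for u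
  proof -
    have "\<And>p. f differentiable (at p)" "\<And>p. g differentiable (at p)" using mult.IH by blast+
    thus ?thesis unfolding dd_def by (intro ext) (simp only: fd_mult)
  qed
  then show ?case using mult by (auto intro!: alg.add alg.mult)
qed

lemma alg_smooth: "g \<in> alg \<Longrightarrow> smooth_fun g"
  unfolding smooth_fun_def using alg_closed unfolding dd_def by blast

lemma smooth_add[simp]: "smooth_fun f \<Longrightarrow> smooth_fun g \<Longrightarrow> smooth_fun (\<lambda>p. f p + g p)"
  by (rule alg_smooth, intro alg.add alg.base)
lemma smooth_mult[simp]: "smooth_fun f \<Longrightarrow> smooth_fun g \<Longrightarrow> smooth_fun (\<lambda>p. f p * g p)"
  by (rule alg_smooth, intro alg.mult alg.base)
lemma smooth_const[simp]: "smooth_fun (\<lambda>p. c)"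
  by (rule alg_smooth, rule alg.const)
lemma smooth_cmult[simp]: "smooth_fun f \<Longrightarrow> smooth_fun (\<lambda>p. c * f p)"
  by (rule alg_smooth, intro alg.mult alg.base alg.const)
lemma smooth_minus[simp]: "smooth_fun f \<Longrightarrow> smooth_fun (\<lambda>p. - f p)"
  using smooth_cmult[of f "-1"] by simp
lemma smooth_sub[simp]: "smooth_fun f \<Longrightarrow> smooth_fun g \<Longrightarrow> smooth_fun (\<lambda>p. f p - g p)"
  using smooth_add[of f "\<lambda>p. - g p"] by simp
lemma smooth_sum[simp]: "(\<And>i. i \<in> I \<Longrightarrow> smooth_fun (F i)) \<Longrightarrow> smooth_fun (\<lambda>p. \<Sum>i\<in>I. F i p)"
proof (induction I rule: infinite_finite_induct)
  case (insert x F)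
  then show ?case by simp
qed simp_all

lemma dd_add: "smooth_fun f \<Longrightarrow> smooth_fun g \<Longrightarrow> dd u (\<lambda>p. f p + g p) = (\<lambda>p. dd u f p + dd u g p)"
  by (simp add: dd_def fd_add smooth_differentiable)
lemma dd_mult: "smooth_fun f \<Longrightarrow> smooth_fun g \<Longrightarrow> dd u (\<lambda>p. f p * g p) = (\<lambda>p. dd u f p * g p + f p * dd u g p)"
  by (simp add: dd_def fd_mult smooth_differentiable add.commute)
lemma dd_const: "dd u (\<lambda>p. c) = (\<lambda>p. 0)"
  by (simp add: dd_def)
lemma dd_cmult: "smooth_fun f \<Longrightarrow> dd u (\<lambda>p. c * f p) = (\<lambda>p. c * dd u f p)"
  using dd_mult[of "\<lambda>p. c" f u] by (simp add: dd_const)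
lemma dd_minus: "smooth_fun f \<Longrightarrow> dd u (\<lambda>p. - f p) = (\<lambda>p. - dd u f p)"
  using dd_cmult[of f u "-1"] by simp
lemma dd_sub: "smooth_fun f \<Longrightarrow> smooth_fun g \<Longrightarrow> dd u (\<lambda>p. f p - g p) = (\<lambda>p. dd u f p - dd u g p)"
  using dd_add[of f "\<lambda>p. - g p" u] dd_minus[of g u] by simp
lemma dd_sum: "(\<And>i. i \<in> I \<Longrightarrow> smooth_fun (F i)) \<Longrightarrow> dd u (\<lambda>p. \<Sum>i\<in>I. F i p) = (\<lambda>p. \<Sum>i\<in>I. dd u (F i) p)"
proof (induction I rule: infinite_finite_induct)
  case (insert x F)
  then show ?case by (simp add: dd_add)
qed (simp_all add: dd_const)

lemma dd_comm: "smooth_fun f \<Longrightarrow> dd u (dd v f) = dd v (dd u f)"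
  unfolding dd_def
  by (rule ext, rule fd_sym[symmetric])
    (auto simp: smooth_differentiable smooth_dd[unfolded dd_def])



abbreviation "ux \<equiv> (axis 1 1, 0) :: pt"
abbreviation "uv \<equiv> (0, axis 1 1) :: pt"

lemma dx1_dd: "dx1 = dd ux" unfolding dx1_def dd_def by (rule ext) simp
lemma dv1_dd: "dv1 = dd uv" unfolding dv1_def dd_def by (rule ext) simp

lemma dd_comm_xv: "smooth_fun g \<Longrightarrow> dd uv (dd ux g) = dd ux (dd uv g)"
  by (rule dd_comm)

lemmas dd_rules = dd_add dd_mult dd_const dd_cmult dd_minus dd_sub dd_sum smooth_dd

lemma Mop_dd: "Mop \<tau> f = (\<lambda>p. - (complex_of_real \<tau> * dd uv (dd uv f) p)
                   - complex_of_real (\<tau>^2) * dd ux (dd uv f) p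
                   - complex_of_real (\<tau>^3 / 3) * dd ux (dd ux f) p)"
  unfolding Mop_def dx1_dd dv1_dd ..

lemma Lam_dd: "Lam \<tau> j f = (if j = 1 then
      (\<lambda>p. (1 / (2 * \<i>)) * (complex_of_real (\<tau> powr (1/2)) * dd uv f p
                              + complex_of_real (\<tau> powr (3/2)) * dd ux f p))
    else
      (\<lambda>p. (complex_of_real (sqrt 3) / (6 * \<i>)) *
             (3 * complex_of_real (\<tau> powr (1/2)) * dd uv f p
              + complex_of_real (\<tau> powr (3/2)) * dd ux f p)))"
  unfolding Lam_def dx1_dd dv1_dd ..

lemmas smooth_rules = smooth_add smooth_mult smooth_const smooth_cmult smooth_minus smooth_sub smooth_sum smooth_dd

lemma smooth_Mop[simp]: "smooth_fun f \<Longrightarrow> smooth_fun (Mop \<tau> f)"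
  unfolding Mop_dd by (intro smooth_rules)

lemma smooth_Lam[simp]: "smooth_fun f \<Longrightarrow> smooth_fun (Lam \<tau> j f)"
  unfolding Lam_dd by (simp only: if_split) (intro conjI impI smooth_rules)

lemma Mop_sum: "(\<And>i. i \<in> I \<Longrightarrow> smooth_fun (F i)) \<Longrightarrow>
   Mop \<tau> (\<lambda>p. \<Sum>i\<in>I. F i p) = (\<lambda>p. \<Sum>i\<in>I. Mop \<tau> (F i) p)"
  unfolding Mop_dd by (simp only: dd_sum smooth_rules) (simp add: sum_distrib_left sum_subtractf sum_negf)

lemma Mop_add: "smooth_fun f \<Longrightarrow> smooth_fun g \<Longrightarrow>
   Mop \<tau> (\<lambda>p. f p + g p) = (\<lambda>p. Mop \<tau> f p + Mop \<tau> g p)"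
  unfolding Mop_dd by (simp only: dd_add smooth_rules) (simp add: algebra_simps)

lemma Mop_cmult: "smooth_fun f \<Longrightarrow>
   Mop \<tau> (\<lambda>p. c * f p) = (\<lambda>p. c * Mop \<tau> f p)"
  unfolding Mop_dd by (simp only: dd_cmult smooth_rules) (simp add: algebra_simps)

lemma comm_gen:
  assumes "smooth_fun f"
  shows "(\<lambda>p. - (A * dd uv (dd uv (\<lambda>p. K * (\<alpha> * dd uv f p + \<beta> * dd ux f p))) p)
                   - B * dd ux (dd uv (\<lambda>p. K * (\<alpha> * dd uv f p + \<beta> * dd ux f p))) p
                   - C * dd ux (dd ux (\<lambda>p. K * (\<alpha> * dd uv f p + \<beta> * dd ux f p))) p)
    = (\<lambda>p. K * (\<alpha> * dd uv (\<lambda>p. - (A * dd uv (dd uv f) p) - B * dd ux (dd uv f) p - C * dd ux (dd ux f) p) p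
           + \<beta> * dd ux (\<lambda>p. - (A * dd uv (dd uv f) p) - B * dd ux (dd uv f) p - C * dd ux (dd ux f) p) p))"
  using assms
  by (simp only: dd_add dd_cmult dd_sub dd_minus smooth_rules dd_comm_xv) (simp add: algebra_simps)

lemma Mop_Lam:
  assumes "smooth_fun f"
  shows "Mop \<tau> (Lam \<tau> j f) = Lam \<tau> j (Mop \<tau> f)"
proof (cases "j = 1")
  case True
  then show ?thesis unfolding Mop_dd Lam_dd using comm_gen[OF assms] by (simp only: True simp_thms if_True)
next
  case False
  then show ?thesis unfolding Mop_dd Lam_dd using comm_gen[OF assms, of _ _ "3 * _"]
    by (simp only: if_False mult.assoc)
qed



lemma alg_gen:
  fixes A B C K1 K2 a b \<alpha> f g fv fx gv gx fvv fxv fxx gvv gxv gxx :: complex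
  assumes h1: "K1*K1*a*a + K2*K2*\<alpha>*\<alpha> = -A"
  and h2: "2*(K1*K1*a*b + K2*K2*\<alpha>*b) = -B"
  and h3: "K1*K1*b*b + K2*K2*b*b = -C"
  shows "- (A * (fvv * g + fv * gv + (fv * gv + f * gvv)))
     - B * (fxv * g + fv * gx + (fx * gv + f * gxv))
     - C * (fxx * g + fx * gx + (fx * gx + f * gxx))
   = (- (A * fvv) - B * fxv - C * fxx) * g + f * (- (A * gvv) - B * gxv - C * gxx)
     + 2 * ((K1 * (a * fv + b * fx)) * (K1 * (a * gv + b * gx))
          + (K2 * (\<alpha> * fv + b * fx)) * (K2 * (\<alpha> * gv + b * gx)))" (is "?L = ?R")
proof -
  have "?R - ?L = fv * gv * 2 * (K1*K1*a*a + K2*K2*\<alpha>*\<alpha> + A)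
     + (fv * gx + fx * gv) * (2*(K1*K1*a*b + K2*K2*\<alpha>*b) + B)
     + fx * gx * 2 * (K1*K1*b*b + K2*K2*b*b + C)"
    by (simp add: algebra_simps)
  also have "\<dots> = 0" using h1 h2 h3 by simp
  finally show ?thesis by simp
qed

lemma mult_gen:
  fixes A B C K1 K2 a b \<alpha> :: complex
  assumes f: "smooth_fun f" and g: "smooth_fun g"
  and h1: "K1*K1*a*a + K2*K2*\<alpha>*\<alpha> = -A"
  and h2: "2*(K1*K1*a*b + K2*K2*\<alpha>*b) = -B"
  and h3: "K1*K1*b*b + K2*K2*b*b = -C"
  shows "(\<lambda>p. - (A * dd uv (dd uv (\<lambda>p. f p * g p)) p)
                   - B * dd ux (dd uv (\<lambda>p. f p * g p)) p
                   - C * dd ux (dd ux (\<lambda>p. f p * g p)) p)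
   = (\<lambda>p. (- (A * dd uv (dd uv f) p) - B * dd ux (dd uv f) p - C * dd ux (dd ux f) p) * g p
         + f p * (- (A * dd uv (dd uv g) p) - B * dd ux (dd uv g) p - C * dd ux (dd ux g) p)
         + 2 * ((K1 * (a * dd uv f p + b * dd ux f p)) * (K1 * (a * dd uv g p + b * dd ux g p))
              + (K2 * (\<alpha> * dd uv f p + b * dd ux f p)) * (K2 * (\<alpha> * dd uv g p + b * dd ux g p))))"
proof -
  have e: "dd ux (dd uv (\<lambda>p. f p * g p)) = (\<lambda>p. dd ux (dd uv f) p * g p + dd uv f p * dd ux g p + (dd ux f p * dd uv g p + f p * dd ux (dd uv g) p))"
      "dd uv (dd uv (\<lambda>p. f p * g p)) = (\<lambda>p. dd uv (dd uv f) p * g p + dd uv f p * dd uv g p + (dd uv f p * dd uv g p + f p * dd uv (dd uv g) p))"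
      "dd ux (dd ux (\<lambda>p. f p * g p)) = (\<lambda>p. dd ux (dd ux f) p * g p + dd ux f p * dd ux g p + (dd ux f p * dd ux g p + f p * dd ux (dd ux g) p))"
    using f g by (simp only: dd_mult dd_add smooth_rules)+
  show ?thesis unfolding e
    by (rule ext) (rule alg_gen[OF h1 h2 h3])
qed

lemma powr_facts:
  fixes \<tau> :: real assumes "0 \<le> \<tau>"
  shows "complex_of_real (\<tau> powr (1/2)) * complex_of_real (\<tau> powr (1/2)) = complex_of_real \<tau>"
    "complex_of_real (\<tau> powr (1/2)) * complex_of_real (\<tau> powr (3/2)) = complex_of_real (\<tau>^2)"
    "complex_of_real (\<tau> powr (3/2)) * complex_of_real (\<tau> powr (3/2)) = complex_of_real (\<tau>^3)"
proof -
  have "\<tau> powr (1/2) * \<tau> powr (1/2) = \<tau> powr (1/2 + 1/2)" by (rule powr_add[symmetric])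
  also have "(1/2 + 1/2 :: real) = 1" by simp
  also have "\<tau> powr 1 = \<tau>" using assms by (simp add: powr_one)
  finally show "complex_of_real (\<tau> powr (1/2)) * complex_of_real (\<tau> powr (1/2)) = complex_of_real \<tau>"
    by (metis of_real_mult)
  have "\<tau> powr (1/2) * \<tau> powr (3/2) = \<tau> powr (1/2 + 3/2)" by (rule powr_add[symmetric])
  also have "(1/2 + 3/2 :: real) = 2" by simp
  also have "\<tau> powr 2 = \<tau>^2" using assms by simp
  finally show "complex_of_real (\<tau> powr (1/2)) * complex_of_real (\<tau> powr (3/2)) = complex_of_real (\<tau>^2)"
    by (metis of_real_mult)
  have "\<tau> powr (3/2) * \<tau> powr (3/2) = \<tau> powr (3/2 + 3/2)" by (rule powr_add[symmetric])
  also have "(3/2 + 3/2 :: real) = 3" by simp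
  also have "\<tau> powr 3 = \<tau>^3" using assms by simp
  finally show "complex_of_real (\<tau> powr (3/2)) * complex_of_real (\<tau> powr (3/2)) = complex_of_real (\<tau>^3)"
    by (metis of_real_mult)
qed

lemma Mop_mult:
  assumes t: "0 \<le> \<tau>" and f: "smooth_fun f" and g: "smooth_fun g"
  shows "Mop \<tau> (\<lambda>p. f p * g p) = (\<lambda>p. Mop \<tau> f p * g p + f p * Mop \<tau> g p
      + 2 * (Lam \<tau> 1 f p * Lam \<tau> 1 g p + Lam \<tau> 2 f p * Lam \<tau> 2 g p))"
proof -
  define a where "a = complex_of_real (\<tau> powr (1/2))"
  define b where "b = complex_of_real (\<tau> powr (3/2))"
  define K1 where "K1 = 1 / (2 * \<i>)"
  define K2 where "K2 = complex_of_real (sqrt 3) / (6 * \<i>)"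
  note pf = powr_facts[OF t, folded a_def b_def]
  have k1: "K1 * K1 = - 1/4" unfolding K1_def by (simp add: complex_eq_iff)
  have s3: "complex_of_real (sqrt 3) * complex_of_real (sqrt 3) = 3"
  proof -
    have "complex_of_real (sqrt 3) * complex_of_real (sqrt 3) = complex_of_real (sqrt 3 * sqrt 3)"
      by (rule of_real_mult[symmetric])
    also have "sqrt 3 * sqrt 3 = (3::real)" by simp
    finally show ?thesis by simp
  qed
  have k2: "K2 * K2 = - 1/12"
  proof -
    have "K2 * K2 = (complex_of_real (sqrt 3) * complex_of_real (sqrt 3)) / ((6 * \<i>) * (6 * \<i>))"
      unfolding K2_def by (rule times_divide_times_eq)
    also have "(6 * \<i>) * (6 * \<i>) = (- 36 :: complex)" by (simp add: complex_eq_iff)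
    finally show ?thesis using s3 by simp
  qed
  have h1: "K1*K1*a*a + K2*K2*(3*a)*(3*a) = - complex_of_real \<tau>"
  proof -
    have "K1*K1*a*a + K2*K2*(3*a)*(3*a) = (K1*K1)*(a*a) + 9*(K2*K2)*(a*a)" by (simp add: algebra_simps)
    also have "\<dots> = - complex_of_real \<tau>" unfolding k1 k2 pf by simp
    finally show ?thesis .
  qed
  have h2: "2*(K1*K1*a*b + K2*K2*(3*a)*b) = - complex_of_real (\<tau>^2)"
  proof -
    have "2*(K1*K1*a*b + K2*K2*(3*a)*b) = 2*(K1*K1)*(a*b) + 6*(K2*K2)*(a*b)" by (simp add: algebra_simps)
    also have "\<dots> = - complex_of_real (\<tau>^2)" unfolding k1 k2 pf by simp
    finally show ?thesis .
  qed
  have h3: "K1*K1*b*b + K2*K2*b*b = - complex_of_real (\<tau>^3/3)"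
  proof -
    have "K1*K1*b*b + K2*K2*b*b = (K1*K1)*(b*b) + (K2*K2)*(b*b)" by (simp add: algebra_simps)
    also have "\<dots> = - complex_of_real (\<tau>^3/3)" unfolding k1 k2 pf by simp
    finally show ?thesis .
  qed
  have M: "\<And>F. Mop \<tau> F = (\<lambda>p. - (complex_of_real \<tau> * dd uv (dd uv F) p)
                   - complex_of_real (\<tau>^2) * dd ux (dd uv F) p
                   - complex_of_real (\<tau>^3 / 3) * dd ux (dd ux F) p)" by (rule Mop_dd)
  have L1: "\<And>F. Lam \<tau> 1 F = (\<lambda>p. K1 * (a * dd uv F p + b * dd ux F p))"
    unfolding Lam_dd a_def b_def K1_def by (simp only: if_True simp_thms)
  have n21: "((2::nat) = 1) = False" by simp
  have L2: "\<And>F. Lam \<tau> 2 F = (\<lambda>p. K2 * ((3*a) * dd uv F p + b * dd ux F p))"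
    unfolding Lam_dd a_def b_def K2_def using n21 by (simp only: if_False)
  show ?thesis
    unfolding M L1 L2 by (rule mult_gen[OF f g h1 h2 h3])
qed



definition W :: "nat \<Rightarrow> nat list set" where "W l = {w. length w = l \<and> set w \<subseteq> {1,2}}"

lemma finite_W: "finite (W l)"
proof -
  have "W l = {xs. set xs \<subseteq> {1,2} \<and> length xs = l}" unfolding W_def by auto
  thus ?thesis using finite_lists_length_eq[of "{1::nat,2}" l] by simp
qed

lemma W0: "W 0 = {[]}" unfolding W_def by auto

lemma W_Suc: "W (Suc l) = (\<lambda>(i,w). i # w) ` ({1,2} \<times> W l)"
proof
  show "W (Suc l) \<subseteq> (\<lambda>(i,w). i # w) ` ({1,2} \<times> W l)"
  proof
    fix x assume "x \<in> W (Suc l)"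
    then obtain i w where "x = i # w" "i \<in> {1,2}" "w \<in> W l" unfolding W_def
      by (cases x) auto
    thus "x \<in> (\<lambda>(i,w). i # w) ` ({1,2} \<times> W l)" by force
  qed
  show "(\<lambda>(i,w). i # w) ` ({1,2} \<times> W l) \<subseteq> W (Suc l)" unfolding W_def by auto
qed

lemma sum_W_Suc: "(\<Sum>w\<in>W (Suc l). F w) = (\<Sum>w\<in>W l. F (1 # w) + F (2 # w))"
proof -
  have inj: "inj_on (\<lambda>(i,w). i # w) ({1::nat,2} \<times> W l)" by (auto simp: inj_on_def)
  have "(\<Sum>w\<in>W (Suc l). F w) = (\<Sum>x\<in>{1::nat,2} \<times> W l. F (fst x # snd x))"
    unfolding W_Suc by (subst sum.reindex[OF inj]) (simp add: case_prod_beta)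
  also have "\<dots> = (\<Sum>i\<in>{1::nat,2}. \<Sum>w\<in>W l. F (i # w))"
    by (subst sum.cartesian_product) (simp add: case_prod_beta)
  also have "\<dots> = (\<Sum>w\<in>W l. F (1 # w)) + (\<Sum>w\<in>W l. F (2 # w))" by simp
  also have "\<dots> = (\<Sum>w\<in>W l. F (1 # w) + F (2 # w))" by (simp add: sum.distrib)
  finally show ?thesis .
qed

lemma lam_word_Cons: "lam_word \<tau> (i # w) f = Lam \<tau> i (lam_word \<tau> w f)"
  unfolding lam_word_def by simp

lemma lam_word_Nil: "lam_word \<tau> [] f = f"
  unfolding lam_word_def by simp

lemma smooth_lam_word[simp]: "smooth_fun f \<Longrightarrow> smooth_fun (lam_word \<tau> w f)"
  by (induction w) (simp_all add: lam_word_Cons lam_word_Nil)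

lemma Mop_lam_word: "smooth_fun f \<Longrightarrow> Mop \<tau> (lam_word \<tau> w f) = lam_word \<tau> w (Mop \<tau> f)"
  by (induction w) (simp_all add: lam_word_Cons lam_word_Nil Mop_Lam)

lemma lam_dot_W: "lam_dot \<tau> l f g = (\<lambda>p. \<Sum>w\<in>W l. lam_word \<tau> w f p * lam_word \<tau> w g p)"
  unfolding lam_dot_def W_def ..

lemma smooth_lam_dot[simp]: "smooth_fun f \<Longrightarrow> smooth_fun g \<Longrightarrow> smooth_fun (lam_dot \<tau> l f g)"
  unfolding lam_dot_W by (intro smooth_sum smooth_mult smooth_lam_word)

lemma lam_dot_0: "lam_dot \<tau> 0 f g = (\<lambda>p. f p * g p)"
  unfolding lam_dot_W W0 by (simp add: lam_word_Nil)

lemma Mop_lam_dot: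
  assumes t: "0 \<le> \<tau>" and f: "smooth_fun f" and g: "smooth_fun g"
  shows "Mop \<tau> (lam_dot \<tau> l f g) = (\<lambda>z. lam_dot \<tau> l (Mop \<tau> f) g z + lam_dot \<tau> l f (Mop \<tau> g) z
      + 2 * lam_dot \<tau> (Suc l) f g z)"
proof -
  have "Mop \<tau> (lam_dot \<tau> l f g) = (\<lambda>p. \<Sum>w\<in>W l. Mop \<tau> (\<lambda>p. lam_word \<tau> w f p * lam_word \<tau> w g p) p)"
    unfolding lam_dot_W using f g by (intro Mop_sum) simp
  also have "\<dots> = (\<lambda>p. \<Sum>w\<in>W l. lam_word \<tau> w (Mop \<tau> f) p * lam_word \<tau> w g p
      + lam_word \<tau> w f p * lam_word \<tau> w (Mop \<tau> g) p
      + 2 * (lam_word \<tau> (1 # w) f p * lam_word \<tau> (1 # w) g p + lam_word \<tau> (2 # w) f p * lam_word \<tau> (2 # w) g p))"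
    using f g by (simp add: Mop_mult[OF t] Mop_lam_word lam_word_Cons)
  also have "\<dots> = (\<lambda>z. lam_dot \<tau> l (Mop \<tau> f) g z + lam_dot \<tau> l f (Mop \<tau> g) z
      + 2 * lam_dot \<tau> (Suc l) f g z)"
    unfolding lam_dot_W sum_W_Suc by (simp add: sum.distrib sum_distrib_left)
  finally show ?thesis .
qed



fun cc :: "nat \<Rightarrow> int \<Rightarrow> int \<Rightarrow> int \<Rightarrow> int \<Rightarrow> nat" where
  "cc 0 j l p q = (if j = 0 \<and> l = 0 \<and> p = 0 \<and> q = 0 then 1 else 0)"
| "cc (Suc k) j l p q = cc k (j - 2) l (p - 1) q + cc k j l p (q - 1) + 2 * cc k (j - 1) (l - 1) p q"

lemma cc_supp: "cc k j l p q \<noteq> 0 \<Longrightarrow> 0 \<le> l \<and> 0 \<le> p \<and> 0 \<le> q \<and> j = l + 2 * p \<and> l + p + q = int k"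
proof (induction k arbitrary: j l p q)
  case 0
  then show ?case by (simp split: if_splits)
next
  case (Suc k)
  from Suc.prems consider "cc k (j - 2) l (p - 1) q \<noteq> 0" | "cc k j l p (q - 1) \<noteq> 0" | "cc k (j - 1) (l - 1) p q \<noteq> 0"
    by fastforce
  then show ?case
  proof cases
    case 1 from Suc.IH[OF 1] show ?thesis by simp
  next
    case 2 from Suc.IH[OF 2] show ?thesis by simp
  next
    case 3 from Suc.IH[OF 3] show ?thesis by simp
  qed
qed

definition C :: "nat \<Rightarrow> nat \<Rightarrow> nat \<Rightarrow> nat \<Rightarrow> nat" where
  "C k l p q = cc k (int (l + 2 * p)) (int l) (int p) (int q)"

lemma C_supp: "C k l p q \<noteq> 0 \<Longrightarrow> l + p + q = k"
  unfolding C_def using cc_supp by fastforce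

lemma C_big: "k < N \<Longrightarrow> C k N p q = 0" "k < N \<Longrightarrow> C k l N q = 0" "k < N \<Longrightarrow> C k l p N = 0"
  using C_supp by fastforce+

lemma C_Suc: "C (Suc k) l p q = (if p = 0 then 0 else C k l (p - 1) q) + (if q = 0 then 0 else C k l p (q - 1))
   + 2 * (if l = 0 then 0 else C k (l - 1) p q)"
proof -
  have a: "cc k (int (l + 2 * p) - 2) (int l) (int p - 1) (int q) = (if p = 0 then 0 else C k l (p - 1) q)"
  proof (cases p)
    case 0 then show ?thesis using cc_supp by fastforce
  next
    case (Suc m) then show ?thesis unfolding C_def by (simp add: algebra_simps)
  qed
  have b: "cc k (int (l + 2 * p)) (int l) (int p) (int q - 1) = (if q = 0 then 0 else C k l p (q - 1))"
  proof (cases q)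
    case 0 then show ?thesis using cc_supp by fastforce
  next
    case (Suc m) then show ?thesis unfolding C_def by (simp add: algebra_simps)
  qed
  have c: "cc k (int (l + 2 * p) - 1) (int l - 1) (int p) (int q) = (if l = 0 then 0 else C k (l - 1) p q)"
  proof (cases l)
    case 0 then show ?thesis using cc_supp by fastforce
  next
    case (Suc m) then show ?thesis unfolding C_def by (simp add: algebra_simps)
  qed
  show ?thesis unfolding C_def[of "Suc k"] cc.simps(2) a b c ..
qed

definition EE :: "(nat \<Rightarrow> nat \<Rightarrow> nat \<Rightarrow> nat) \<Rightarrow> (nat \<Rightarrow> nat \<Rightarrow> nat \<Rightarrow> 'a::comm_semiring_1) \<Rightarrow> nat \<Rightarrow> 'a" where
  "EE Cf Y N = (\<Sum>l\<le>N. \<Sum>p\<le>N. \<Sum>q\<le>N. of_nat (Cf l p q) * Y l p q)"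

lemma sum_shift:
  fixes A :: "nat \<Rightarrow> 'a::comm_monoid_add"
  assumes "A n = 0"
  shows "(\<Sum>p\<le>n. (if p = 0 then 0 else A (p - 1))) = (\<Sum>p\<le>n. A p)"
proof (cases n)
  case 0 then show ?thesis using assms by simp
next
  case (Suc M)
  have "(\<Sum>p\<le>n. (if p = 0 then 0 else A (p - 1))) = (\<Sum>p\<le>M. A p)"
    unfolding Suc by (subst sum.atMost_Suc_shift) simp
  also have "\<dots> = (\<Sum>p\<le>n. A p)" using assms unfolding Suc by simp
  finally show ?thesis .
qed

lemma EE_split: "EE (\<lambda>l p q. C1 l p q + C2 l p q + 2 * C3 l p q) Y N = EE C1 Y N + EE C2 Y N + 2 * EE C3 Y N"
  unfolding EE_def by (simp add: algebra_simps sum.distrib sum_distrib_left)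

lemma EE_shift_p:
  assumes "\<And>l q. Cf l N q = 0"
  shows "EE (\<lambda>l p q. if p = 0 then 0 else Cf l (p - 1) q) Y N = EE Cf (\<lambda>l p q. Y l (Suc p) q) N"
  unfolding EE_def
proof (rule sum.cong[OF refl])
  fix l
  have "(\<Sum>p\<le>N. \<Sum>q\<le>N. of_nat (if p = 0 then 0 else Cf l (p - 1) q) * Y l p q)
      = (\<Sum>p\<le>N. if p = 0 then 0 else (\<lambda>p. \<Sum>q\<le>N. of_nat (Cf l p q) * Y l (Suc p) q) (p - 1))"
    by (rule sum.cong[OF refl]) auto
  also have "\<dots> = (\<Sum>p\<le>N. \<Sum>q\<le>N. of_nat (Cf l p q) * Y l (Suc p) q)"
    by (rule sum_shift) (simp add: assms)
  finally show "(\<Sum>p\<le>N. \<Sum>q\<le>N. of_nat (if p = 0 then 0 else Cf l (p - 1) q) * Y l p q)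
      = (\<Sum>p\<le>N. \<Sum>q\<le>N. of_nat (Cf l p q) * Y l (Suc p) q)" .
qed

lemma EE_shift_q:
  assumes "\<And>l p. Cf l p N = 0"
  shows "EE (\<lambda>l p q. if q = 0 then 0 else Cf l p (q - 1)) Y N = EE Cf (\<lambda>l p q. Y l p (Suc q)) N"
  unfolding EE_def
proof (rule sum.cong[OF refl], rule sum.cong[OF refl])
  fix l p
  have "(\<Sum>q\<le>N. of_nat (if q = 0 then 0 else Cf l p (q - 1)) * Y l p q)
      = (\<Sum>q\<le>N. if q = 0 then 0 else (\<lambda>q. of_nat (Cf l p q) * Y l p (Suc q)) (q - 1))"
    by (rule sum.cong[OF refl]) auto
  also have "\<dots> = (\<Sum>q\<le>N. of_nat (Cf l p q) * Y l p (Suc q))"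
    by (rule sum_shift) (simp add: assms)
  finally show "(\<Sum>q\<le>N. of_nat (if q = 0 then 0 else Cf l p (q - 1)) * Y l p q)
      = (\<Sum>q\<le>N. of_nat (Cf l p q) * Y l p (Suc q))" .
qed

lemma EE_shift_l:
  assumes "\<And>p q. Cf N p q = 0"
  shows "EE (\<lambda>l p q. if l = 0 then 0 else Cf (l - 1) p q) Y N = EE Cf (\<lambda>l p q. Y (Suc l) p q) N"
proof -
  have "EE (\<lambda>l p q. if l = 0 then 0 else Cf (l - 1) p q) Y N
      = (\<Sum>l\<le>N. if l = 0 then 0 else (\<lambda>l. \<Sum>p\<le>N. \<Sum>q\<le>N. of_nat (Cf l p q) * Y (Suc l) p q) (l - 1))"
    unfolding EE_def by (rule sum.cong[OF refl]) auto
  also have "\<dots> = (\<Sum>l\<le>N. \<Sum>p\<le>N. \<Sum>q\<le>N. of_nat (Cf l p q) * Y (Suc l) p q)"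
    by (rule sum_shift) (simp add: assms)
  finally show ?thesis unfolding EE_def .
qed

abbreviation E :: "nat \<Rightarrow> (nat \<Rightarrow> nat \<Rightarrow> nat \<Rightarrow> 'a::comm_semiring_1) \<Rightarrow> nat \<Rightarrow> 'a" where
  "E k \<equiv> EE (C k)"

lemma E_Suc:
  assumes "Suc k \<le> N"
  shows "E (Suc k) Y N = E k (\<lambda>l p q. Y l (Suc p) q + Y l p (Suc q) + 2 * Y (Suc l) p q) N"
proof -
  have kN: "k < N" using assms by simp
  have "E (Suc k) Y N = EE (\<lambda>l p q. (if p = 0 then 0 else C k l (p - 1) q) + (if q = 0 then 0 else C k l p (q - 1))
   + 2 * (if l = 0 then 0 else C k (l - 1) p q)) Y N" unfolding C_Suc ..
  also have "\<dots> = E k (\<lambda>l p q. Y l (Suc p) q) N + E k (\<lambda>l p q. Y l p (Suc q)) N + 2 * E k (\<lambda>l p q. Y (Suc l) p q) N"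
    unfolding EE_split
    by (simp only: EE_shift_p EE_shift_q EE_shift_l C_big[OF kN])
  also have "\<dots> = E k (\<lambda>l p q. Y l (Suc p) q + Y l p (Suc q) + 2 * Y (Suc l) p q) N"
    unfolding EE_def by (simp add: algebra_simps sum.distrib sum_distrib_left)
  finally show ?thesis .
qed

lemma E_0: "E 0 Y N = Y 0 0 0"
proof -
  have s1: "(\<Sum>q\<le>N. of_nat (C 0 l p q) * Y l p q) = (if l = 0 then (if p = 0 then Y 0 0 0 else 0) else 0)" for l p
  proof -
    have e: "of_nat (if b then 1 else 0) * x = (if b then x else (0::'a))" for b and x :: 'a by simp
    show ?thesis unfolding C_def by (cases "l = 0"; cases "p = 0"; simp add: e)
  qed
  have s2: "(\<Sum>p\<le>N. (if l = 0 then (if p = 0 then Y 0 0 0 else 0) else 0)) = (if l = 0 then Y 0 0 0 else 0)" for l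
    by (cases "l = 0") simp_all
  show ?thesis unfolding EE_def s1 s2 by simp
qed

lemma E_cong: "(\<And>l p q. l + p + q = k \<Longrightarrow> Y l p q = Y' l p q) \<Longrightarrow> E k Y N = E k Y' N"
  unfolding EE_def
  by (intro sum.cong refl) (metis C_supp mult_not_zero of_nat_0)

lemma E_add: "E k (\<lambda>l p q. Y l p q + Y' l p q) N = E k Y N + E k Y' N"
  unfolding EE_def by (simp add: algebra_simps sum.distrib)

lemma E_sum: "finite J \<Longrightarrow> E k (\<lambda>l p q. \<Sum>j\<in>J. Y j l p q) N = (\<Sum>j\<in>J. E k (Y j) N)"
proof (induction J rule: finite_induct)
  case empty then show ?case unfolding EE_def by simp
next
  case (insert x F) then show ?case by (simp add: E_add)
qed



lemma E_box: "E k Y N = (\<Sum>(l,p,q)\<in>{..N}\<times>{..N}\<times>{..N}. of_nat (C k l p q) * Y l p q)"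
  unfolding EE_def by (simp add: sum.cartesian_product)

lemma conv:
  fixes F :: "nat \<Rightarrow> nat \<Rightarrow> nat \<Rightarrow> 'a::comm_semiring_1"
  assumes jk: "j \<le> 2*k" and kN: "k \<le> N"
  shows "(\<Sum>(l,p,q)\<in>idx k j. of_nat (cc k (int j) (int l) (int p) (int q)) * F l p q)
     = E k (\<lambda>l p q. if l + 2*p = j then F l p q else 0) N"
  unfolding E_box
proof (rule sum.mono_neutral_cong_left)
  show "finite ({..N}\<times>{..N}\<times>{..N})" by simp
  show "idx k j \<subseteq> {..N}\<times>{..N}\<times>{..N}"
  proof
    fix x assume "x \<in> idx k j"
    then obtain l p q where x: "x = (l,p,q)" "l + 2*p = j" "l + 2*q = 2*k - j" unfolding idx_def by auto
    hence "l + p + q = k" using jk by simp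
    thus "x \<in> {..N}\<times>{..N}\<times>{..N}" using x kN by auto
  qed
  show "\<forall>x\<in>{..N}\<times>{..N}\<times>{..N} - idx k j. (case x of (l,p,q) \<Rightarrow> of_nat (C k l p q) * (if l + 2*p = j then F l p q else 0)) = 0"
  proof
    fix x assume x: "x \<in> {..N}\<times>{..N}\<times>{..N} - idx k j"
    obtain l p q where xx: "x = (l,p,q)" by (cases x) auto
    show "(case x of (l,p,q) \<Rightarrow> of_nat (C k l p q) * (if l + 2*p = j then F l p q else 0)) = 0"
    proof (cases "l + 2*p = j \<and> C k l p q \<noteq> 0")
      case True
      hence "l + p + q = k" using C_supp by blast
      hence "x \<in> idx k j" using True xx unfolding idx_def by auto
      thus ?thesis using x by simp
    next
      case False thus ?thesis using xx by auto
    qed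
  qed
  show "\<And>x. x \<in> idx k j \<Longrightarrow> (case x of (l,p,q) \<Rightarrow> of_nat (cc k (int j) (int l) (int p) (int q)) * F l p q)
     = (case x of (l,p,q) \<Rightarrow> of_nat (C k l p q) * (if l + 2*p = j then F l p q else 0))"
    unfolding idx_def C_def by auto
qed

definition bn :: "nat \<Rightarrow> int \<Rightarrow> nat" where
  "bn k j = (if j < 0 then 0 else (2*k) choose (nat j))"

lemma bn_Suc: "bn (Suc k) j = bn k (j - 2) + bn k j + 2 * bn k (j - 1)"
proof (cases "j < 0")
  case True then show ?thesis unfolding bn_def by simp
next
  case False
  then obtain m where m: "j = int m" by (metis nonneg_int_cases not_less)
  show ?thesis
  proof (cases m)
    case 0 then show ?thesis unfolding bn_def m by simp
  next
    case (Suc m1)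
    show ?thesis
    proof (cases m1)
      case 0 then show ?thesis unfolding bn_def m Suc by simp
    next
      case (Suc m2)
      have "2 * Suc k = Suc (Suc (2*k))" by simp
      hence "((2 * Suc k) choose (Suc (Suc m2))) = ((2*k) choose m2) + ((2*k) choose (Suc (Suc m2))) + 2 * ((2*k) choose (Suc m2))"
        by simp
      moreover have nn: "nat (j - 2) = m2" "nat j = Suc (Suc m2)" "nat (j - 1) = Suc m2"
        "\<not> j < 0" "\<not> j - 2 < 0" "\<not> j - 1 < 0" using m \<open>m = Suc m1\<close> Suc by auto
      ultimately show ?thesis unfolding bn_def by (simp only: nn if_False)
    qed
  qed
qed

definition Yj :: "int \<Rightarrow> nat \<Rightarrow> nat \<Rightarrow> nat \<Rightarrow> nat" where
  "Yj j l p q = (if int l + 2 * int p = j then 1 else 0)"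

lemma E_Yj: "k \<le> N \<Longrightarrow> E k (Yj j) N = bn k j"
proof (induction k arbitrary: j N)
  case 0
  then show ?case by (simp add: E_0 Yj_def bn_def)
next
  case (Suc k)
  have "E (Suc k) (Yj j) N = E k (\<lambda>l p q. Yj j l (Suc p) q + Yj j l p (Suc q) + 2 * Yj j (Suc l) p q) N"
    using Suc.prems by (rule E_Suc)
  also have "\<dots> = E k (\<lambda>l p q. Yj (j - 2) l p q + Yj j l p q + 2 * Yj (j - 1) l p q) N"
    by (intro E_cong) (simp add: Yj_def algebra_simps)
  also have "\<dots> = E k (Yj (j - 2)) N + E k (Yj j) N + 2 * E k (Yj (j - 1)) N"
    unfolding EE_def by (simp add: algebra_simps sum.distrib sum_distrib_left)
  also have "\<dots> = bn (Suc k) j" using Suc by (simp add: bn_Suc)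
  finally show ?case .
qed

lemma binom_sum:
  assumes "j \<le> 2 * k"
  shows "(\<Sum>(l, p, q)\<in>idx k j. cc k (int j) (int l) (int p) (int q)) = (2 * k) choose j"
proof -
  have "(\<Sum>(l, p, q)\<in>idx k j. cc k (int j) (int l) (int p) (int q))
     = (\<Sum>(l, p, q)\<in>idx k j. of_nat (cc k (int j) (int l) (int p) (int q)) * (\<lambda>l p q. 1::nat) l p q)" by simp
  also have "\<dots> = E k (\<lambda>l p q. if l + 2*p = j then 1 else 0) k"
    by (rule conv[OF assms]) simp
  also have "\<dots> = E k (Yj (int j)) k"
    by (intro E_cong) (simp add: Yj_def)
  also have "\<dots> = bn k (int j)" by (rule E_Yj) simp
  also have "\<dots> = (2 * k) choose j" by (simp add: bn_def)
  finally show ?thesis .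
qed



lemma Mop_E:
  assumes "\<And>l p q. smooth_fun (Xf l p q)"
  shows "Mop \<tau> (\<lambda>z. E k (\<lambda>l p q. Xf l p q z) N) = (\<lambda>z. E k (\<lambda>l p q. Mop \<tau> (Xf l p q) z) N)"
  unfolding EE_def using assms by (simp add: Mop_sum Mop_cmult)

lemma smooth_funpow[simp]: "smooth_fun f \<Longrightarrow> smooth_fun ((Mop \<tau> ^^ n) f)"
  by (induction n) simp_all

lemma main_id:
  assumes t: "0 \<le> \<tau>" and g: "smooth_fun g" and h: "smooth_fun h"
  shows "k \<le> N \<Longrightarrow> (Mop \<tau> ^^ k) (\<lambda>z. g z * h z)
     = (\<lambda>z. E k (\<lambda>l p q. lam_dot \<tau> l ((Mop \<tau> ^^ p) g) ((Mop \<tau> ^^ q) h) z) N)"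
proof (induction k arbitrary: N)
  case 0
  then show ?case by (simp add: E_0 lam_dot_0)
next
  case (Suc k)
  have "(Mop \<tau> ^^ Suc k) (\<lambda>z. g z * h z) = Mop \<tau> ((Mop \<tau> ^^ k) (\<lambda>z. g z * h z))" by simp
  also have "\<dots> = Mop \<tau> (\<lambda>z. E k (\<lambda>l p q. lam_dot \<tau> l ((Mop \<tau> ^^ p) g) ((Mop \<tau> ^^ q) h) z) N)"
    using Suc.IH[of N] Suc.prems by simp
  also have "\<dots> = (\<lambda>z. E k (\<lambda>l p q. Mop \<tau> (lam_dot \<tau> l ((Mop \<tau> ^^ p) g) ((Mop \<tau> ^^ q) h)) z) N)"
    by (rule Mop_E) (simp add: g h)
  also have "\<dots> = (\<lambda>z. E k (\<lambda>l p q. lam_dot \<tau> l ((Mop \<tau> ^^ Suc p) g) ((Mop \<tau> ^^ q) h) z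
        + lam_dot \<tau> l ((Mop \<tau> ^^ p) g) ((Mop \<tau> ^^ Suc q) h) z
        + 2 * lam_dot \<tau> (Suc l) ((Mop \<tau> ^^ p) g) ((Mop \<tau> ^^ q) h) z) N)"
    by (simp add: Mop_lam_dot[OF t] g h)
  also have "\<dots> = (\<lambda>z. E (Suc k) (\<lambda>l p q. lam_dot \<tau> l ((Mop \<tau> ^^ p) g) ((Mop \<tau> ^^ q) h) z) N)"
    using Suc.prems by (simp add: E_Suc)
  finally show ?case .
qed

lemma final_id:
  assumes t: "0 \<le> \<tau>" and g: "smooth_fun g" and h: "smooth_fun h"
  shows "(Mop \<tau> ^^ k) (\<lambda>z. g z * h z) =
          (\<lambda>z. \<Sum>j = 0..2 * k. \<Sum>(l, p, q)\<in>idx k j.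
               of_nat (cc k (int j) (int l) (int p) (int q)) *
               lam_dot \<tau> l ((Mop \<tau> ^^ p) g) ((Mop \<tau> ^^ q) h) z)"
proof (rule ext)
  fix z
  define X where "X = (\<lambda>l p q. lam_dot \<tau> l ((Mop \<tau> ^^ p) g) ((Mop \<tau> ^^ q) h) z)"
  have "(\<Sum>j = 0..2 * k. \<Sum>(l, p, q)\<in>idx k j.
               of_nat (cc k (int j) (int l) (int p) (int q)) * lam_dot \<tau> l ((Mop \<tau> ^^ p) g) ((Mop \<tau> ^^ q) h) z)
     = (\<Sum>j = 0..2 * k. E k (\<lambda>l p q. if l + 2*p = j then X l p q else 0) k)"
  proof (rule sum.cong[OF refl])
    fix j assume "j \<in> {0..2*k}"
    hence "j \<le> 2 * k" by simp
    from conv[OF this order.refl, of X] show "(\<Sum>(l, p, q)\<in>idx k j.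
               of_nat (cc k (int j) (int l) (int p) (int q)) * lam_dot \<tau> l ((Mop \<tau> ^^ p) g) ((Mop \<tau> ^^ q) h) z)
         = E k (\<lambda>l p q. if l + 2*p = j then X l p q else 0) k" unfolding X_def by simp
  qed
  also have "\<dots> = E k (\<lambda>l p q. \<Sum>j = 0..2 * k. if l + 2*p = j then X l p q else 0) k"
    by (rule E_sum[symmetric]) simp
  also have "\<dots> = E k X k"
  proof (rule E_cong)
    fix l p q assume "l + p + q = k"
    hence "l + 2 * p \<in> {0..2*k}" by simp
    thus "(\<Sum>j = 0..2 * k. if l + 2*p = j then X l p q else 0) = X l p q"
      by (simp add: sum.delta)
  qed
  also have "\<dots> = (Mop \<tau> ^^ k) (\<lambda>z. g z * h z) z"
    unfolding main_id[OF t g h order.refl] X_def ..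
  finally show "(Mop \<tau> ^^ k) (\<lambda>z. g z * h z) z = (\<Sum>j = 0..2 * k. \<Sum>(l, p, q)\<in>idx k j.
               of_nat (cc k (int j) (int l) (int p) (int q)) * lam_dot \<tau> l ((Mop \<tau> ^^ p) g) ((Mop \<tau> ^^ q) h) z)"
    by simp
qed

theorem lemma4p2:
  fixes t0 t :: real
  assumes "0 < t0" "t0 \<le> 1/2" "t0 \<le> t" "t \<le> 1"
  shows "\<exists>c :: nat \<Rightarrow> int \<Rightarrow> int \<Rightarrow> int \<Rightarrow> int \<Rightarrow> nat.
    c 0 0 0 0 0 = 1
    \<and> (\<forall>k j l p q. (j > 2 * int k \<or> j < 0 \<or> l < 0 \<or> p < 0 \<or> q < 0) \<longrightarrow> c k j l p q = 0)
    \<and> (\<forall>k j l p q. c (Suc k) j l p q =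
          c k (j - 2) l (p - 1) q + c k j l p (q - 1) + 2 * c k (j - 1) (l - 1) p q)
    \<and> (\<forall>k g h. smooth_fun g \<and> periodic_x g \<and> smooth_fun h \<and> periodic_x h \<longrightarrow>
          (Mop (t - t0) ^^ k) (\<lambda>z. g z * h z) =
          (\<lambda>z. \<Sum>j = 0..2 * k. \<Sum>(l, p, q)\<in>idx k j.
               of_nat (c k (int j) (int l) (int p) (int q)) *
               lam_dot (t - t0) l ((Mop (t - t0) ^^ p) g) ((Mop (t - t0) ^^ q) h) z))
    \<and> (\<forall>k j. j \<le> 2 * k \<longrightarrow>
          (\<Sum>(l, p, q)\<in>idx k j. c k (int j) (int l) (int p) (int q)) = (2 * k) choose j)"
proof (intro exI[of _ cc] conjI allI impI)
  show "cc 0 0 0 0 0 = 1" by simp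
next
  fix k :: nat and j l p q :: int
  assume a: "2 * int k < j \<or> j < 0 \<or> l < 0 \<or> p < 0 \<or> q < 0"
  show "cc k j l p q = 0"
  proof (rule ccontr)
    assume "cc k j l p q \<noteq> 0"
    from cc_supp[OF this] a show False by linarith
  qed
next
  fix k :: nat and j l p q :: int
  show "cc (Suc k) j l p q = cc k (j - 2) l (p - 1) q + cc k j l p (q - 1) + 2 * cc k (j - 1) (l - 1) p q"
    by simp
next
  fix k g h
  assume "smooth_fun g \<and> periodic_x g \<and> smooth_fun h \<and> periodic_x h"
  moreover have "0 \<le> t - t0" using assms by simp
  ultimately show "(Mop (t - t0) ^^ k) (\<lambda>z. g z * h z) =
          (\<lambda>z. \<Sum>j = 0..2 * k. \<Sum>(l, p, q)\<in>idx k j.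
               of_nat (cc k (int j) (int l) (int p) (int q)) *
               lam_dot (t - t0) l ((Mop (t - t0) ^^ p) g) ((Mop (t - t0) ^^ q) h) z)"
    using final_id by blast
next
  fix k j :: nat assume "j \<le> 2 * k"
  thus "(\<Sum>(l, p, q)\<in>idx k j. cc k (int j) (int l) (int p) (int q)) = (2 * k) choose j"
    by (rule binom_sum)
qed


end
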